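(* Let $n\geq 3$, $p,q>0$ with $pq>1$, $\alpha\in(0,n)$ and $\sigma_1,\sigma_2\in[0,\alpha)$, and let $u,v$ be bounded and decaying positive solutions of $$u(x)=\int_{\mathbb{R}^n}\frac{v(y)^q}{|x-y|^{n-\alpha}|y|^{\sigma_1}}\,dy,\qquad v(x)=\int_{\mathbb{R}^n}\frac{u(y)^p}{|x-y|^{n-\alpha}|y|^{\sigma_2}}\,dy,\qquad x\in\mathbb{R}^n.$$ (i) There exists $C>0$ such that, as $|x|\to\infty$, $u(x)\leq C|x|^{-q_0}$ and $v(x)\leq C|x|^{-p_0}$. (ii) If moreover $\frac{n-\sigma_1}{1+q}+\frac{n-\sigma_2}{1+p}>n-\alpha$, then $$\int_{\mathbb{R}^n}\frac{u(x)^{p+1}}{|x|^{\sigma_2}}\,dx<\infty\quad\text{and}\quad\int_{\mathbb{R}^n}\frac{v(x)^{q+1}}{|x|^{\sigma_1}}\,dx<\infty.$$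
   Context: Define $$p_0=\frac{\alpha(1+p)-(\sigma_2+\sigma_1p)}{pq-1},\qquad q_0=\frac{\alpha(1+q)-(\sigma_1+\sigma_2q)}{pq-1}.$$ The notation $f(x)\simeq g(x)$ means there exist constants $c,C>0$ with $cg(x)\leq f(x)\leq Cg(x)$ as $|x|\to\infty$. A positive solution is decaying if $u(x)\simeq|x|^{-\theta_1}$ and $v(x)\simeq|x|^{-\theta_2}$ for some $\theta_1,\theta_2>0$. *)

theory Defs
  imports "HOL-Analysis.Analysis"
begin

definition p0 :: "real \<Rightarrow> real \<Rightarrow> real \<Rightarrow> real \<Rightarrow> real \<Rightarrow> real" where
  "p0 \<alpha> p q \<sigma>1 \<sigma>2 = (\<alpha> * (1 + p) - (\<sigma>2 + \<sigma>1 * p)) / (p * q - 1)"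

definition q0 :: "real \<Rightarrow> real \<Rightarrow> real \<Rightarrow> real \<Rightarrow> real \<Rightarrow> real" where
  "q0 \<alpha> p q \<sigma>1 \<sigma>2 = (\<alpha> * (1 + q) - (\<sigma>1 + \<sigma>2 * q)) / (p * q - 1)"

definition decays_like :: "('a::real_normed_vector \<Rightarrow> real) \<Rightarrow> real \<Rightarrow> bool" where
  "decays_like f \<theta> \<longleftrightarrow> (\<exists>c C R. c > 0 \<and> C > 0 \<and>
     (\<forall>x. norm x \<ge> R \<longrightarrow> c * norm x powr (-\<theta>) \<le> f x \<and> f x \<le> C * norm x powr (-\<theta>)))"

end

theory Submission
  imports Defs
begin

lemma dyadic_exists:
  fixes t :: real assumes "1 \<le> t"
  shows "\<exists>k::nat. 2^k \<le> t \<and> t < 2^(k+1)"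
proof -
  obtain m::nat where m: "t < 2^m" using real_arch_pow[of 2 t] by auto
  have ex: "\<exists>k. t < (2::real)^(k+1)"
  proof (intro exI)
    show "t < (2::real)^(m+1)" using m by (smt (verit) power_strict_increasing_iff less_add_one one_less_numeral_iff semiring_norm(76))
  qed
  define k where "k = (LEAST k. t < (2::real)^(k+1))"
  have 1: "t < 2^(k+1)" unfolding k_def by (rule LeastI_ex[OF ex])
  have 2: "2^k \<le> t"
  proof (cases k)
    case 0 thus ?thesis using assms by simp
  next
    case (Suc j)
    have "\<not> t < 2^(j+1)" using not_less_Least[of j "\<lambda>k. t < (2::real)^(k+1)"] Suc k_def by auto
    thus ?thesis using Suc by simp
  qed
  thus ?thesis using 1 by blast
qed

lemma pow_geom:
  fixes c \<rho> d \<gamma> :: real and D k :: nat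
  assumes "c > 0" "\<rho> > 0" "d \<ge> 0"
  shows "(c * \<rho>^k) powr (-\<gamma>) * (d * \<rho>^k)^D = (c powr (-\<gamma>) * d^D) * (\<rho> powr (real D - \<gamma>))^k"
proof -
  have a: "(c * \<rho>^k) powr (-\<gamma>) = c powr (-\<gamma>) * \<rho> powr (- \<gamma> * k)"
    using assms by (simp add: powr_mult powr_realpow[symmetric] powr_powr mult.commute)
  have b: "(d * \<rho>^k)^D = d^D * \<rho> powr (real k * D)"
    using assms by (simp add: power_mult_distrib powr_realpow[symmetric] power_mult[symmetric] powr_powr mult.commute)
  have c: "(\<rho> powr (real D - \<gamma>))^k = \<rho> powr ((real D - \<gamma>) * k)"
    using assms by (simp add: powr_realpow[symmetric] powr_powr)
  show ?thesis unfolding a b c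
    by (simp add: algebra_simps powr_add[symmetric])
qed

lemma dyadic_finite:
  fixes f :: "'a::euclidean_space \<Rightarrow> ennreal" and a b :: "nat \<Rightarrow> real"
  assumes f: "\<And>x. f x \<noteq> 0 \<Longrightarrow> \<exists>k. f x \<le> ennreal (a k) \<and> norm x < b k"
    and a: "\<And>k. a k \<ge> 0" and b: "\<And>k. b k \<ge> 0"
    and s: "summable (\<lambda>k. a k * b k ^ DIM('a))"
  shows "(\<integral>\<^sup>+x. f x \<partial>lborel) < \<infinity>"
proof -
  define V where "V = unit_ball_vol (DIM('a))"
  have V: "V \<ge> 0" unfolding V_def by simp
  have "(\<integral>\<^sup>+x. f x \<partial>lborel) \<le> (\<integral>\<^sup>+x. (\<Sum>k. ennreal (a k) * indicator (ball 0 (b k)) (x::'a)) \<partial>lborel)"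
  proof (intro nn_integral_mono)
    fix x
    show "f x \<le> (\<Sum>k. ennreal (a k) * indicator (ball 0 (b k)) x)"
    proof (cases "f x = 0")
      case True thus ?thesis by simp
    next
      case False
      then obtain k where k: "f x \<le> ennreal (a k)" "norm x < b k" using f by blast
      have "f x \<le> ennreal (a k) * indicator (ball 0 (b k)) x" using k by (simp add: indicator_def)
      also have "\<dots> \<le> (\<Sum>k. ennreal (a k) * indicator (ball 0 (b k)) x)"
      proof -
        define g where "g = (\<lambda>k. ennreal (a k) * indicator (ball 0 (b k)) x)"
        have "sum g {k} \<le> suminf g" by (rule sum_le_suminf) auto
        hence "g k \<le> suminf g" by simp
        thus ?thesis by (simp only: g_def)
      qed
      finally show ?thesis .
    qed
  qed
  also have "\<dots> = (\<Sum>k. \<integral>\<^sup>+x. ennreal (a k) * indicator (ball 0 (b k)) (x::'a) \<partial>lborel)"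
    by (rule nn_integral_suminf[of "\<lambda>k x. ennreal (a k) * indicator (ball 0 (b k)) x"]) (auto intro!: borel_measurable_times_ennreal borel_measurable_indicator)
  also have "\<dots> = (\<Sum>k. ennreal (a k * (V * b k ^ DIM('a))))"
    using b a V by (simp add: nn_integral_cmult_indicator emeasure_ball V_def ennreal_mult)
  also have "\<dots> = ennreal (\<Sum>k. a k * (V * b k ^ DIM('a)))"
  proof (rule suminf_ennreal2)
    show "\<And>k. 0 \<le> a k * (V * b k ^ DIM('a))" using a b V by simp
    show "summable (\<lambda>k. a k * (V * b k ^ DIM('a)))"
      using summable_mult[OF s, of V] by (simp add: mult_ac)
  qed
  also have "\<dots> < \<infinity>" by simp
  finally show ?thesis .
qed


lemma tail_finite:
  fixes R \<beta> :: real assumes R: "R > 0" and \<beta>: "\<beta> > DIM('a)"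
  shows "(\<integral>\<^sup>+x. ennreal (norm x powr (-\<beta>)) * indicator {x. R \<le> norm x} (x::'a::euclidean_space) \<partial>lborel) < \<infinity>"
proof (rule dyadic_finite[where a="\<lambda>k. (R * 2^k) powr (-\<beta>)" and b="\<lambda>k. (2*R) * 2^k"])
  fix x :: 'a
  assume "ennreal (norm x powr (-\<beta>)) * indicator {x. R \<le> norm x} x \<noteq> 0"
  hence x: "R \<le> norm x" by (auto simp: indicator_def split: if_splits)
  obtain k where k: "2^k \<le> norm x / R" "norm x / R < 2^(k+1)"
    using dyadic_exists[of "norm x / R"] x R by auto
  have k1: "R * 2^k \<le> norm x" using k(1) R by (simp add: field_simps)
  have k2: "norm x < 2*R*2^k" using k(2) R by (simp add: field_simps)
  have bpos: "\<beta> > 0" using \<beta> by (smt (verit) of_nat_0_le_iff)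
  have "norm x powr (-\<beta>) \<le> (R*2^k) powr (-\<beta>)"
    by (rule powr_mono2') (use bpos R k1 in auto)
  thus "\<exists>k. ennreal (norm x powr (-\<beta>)) * indicator {x. R \<le> norm x} x \<le> ennreal ((R * 2^k) powr (-\<beta>)) \<and> norm x < (2*R) * 2^k"
    using x k2 by (intro exI[of _ k]) (auto simp: indicator_def)
next
  show "\<And>k. 0 \<le> (R * 2^k) powr (-\<beta>)" by simp
  show "\<And>k. 0 \<le> (2*R) * 2^k" using R by simp
  have eq: "(\<lambda>k. (R * 2^k) powr (-\<beta>) * ((2*R) * 2^k) ^ DIM('a)) =
     (\<lambda>k. (R powr (-\<beta>) * (2*R)^DIM('a)) * ((2::real) powr (real DIM('a) - \<beta>))^k)"
    using R by (intro ext pow_geom) auto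
  have "norm ((2::real) powr (real DIM('a) - \<beta>)) < 1"
    using \<beta> by (simp add: powr_less_one)
  thus "summable (\<lambda>k. (R * 2^k) powr (-\<beta>) * ((2*R) * 2^k) ^ DIM('a))"
    unfolding eq by (intro summable_mult summable_geometric)
qed

lemma origin_finite:
  fixes R s :: real assumes R: "R > 0" and s: "0 \<le> s" "s < DIM('a)"
  shows "(\<integral>\<^sup>+x. ennreal (norm x powr (-s)) * indicator {x. norm x < R} (x::'a::euclidean_space) \<partial>lborel) < \<infinity>"
proof (rule dyadic_finite[where a="\<lambda>k. (R/2 * (1/2)^k) powr (-s)" and b="\<lambda>k. (2*R) * (1/2)^k"])
  fix x :: 'a
  assume A: "ennreal (norm x powr (-s)) * indicator {x. norm x < R} x \<noteq> 0"
  hence x: "norm x < R" by (auto simp: indicator_def split: if_splits)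
  have x0: "x \<noteq> 0" using A by auto
  hence xp: "norm x > 0" by simp
  obtain k where k: "2^k \<le> R / norm x" "R / norm x < 2^(k+1)"
    using dyadic_exists[of "R / norm x"] x xp by auto
  have k1: "R/2 * (1/2)^k \<le> norm x" using k(2) R xp
    by (simp add: field_simps power_one_over)
  have k2: "norm x < 2*R*(1/2)^k" using k(1) R xp
    by (simp add: field_simps power_one_over)
  have "norm x powr (-s) \<le> (R/2 * (1/2)^k) powr (-s)"
    by (rule powr_mono2') (use s R k1 in auto)
  thus "\<exists>k. ennreal (norm x powr (-s)) * indicator {x. norm x < R} x \<le> ennreal ((R/2 * (1/2)^k) powr (-s)) \<and> norm x < (2*R) * (1/2)^k"
    using x k2 by (intro exI[of _ k]) (auto simp: indicator_def)
next
  show "\<And>k. 0 \<le> (R/2 * (1/2)^k) powr (-s)" by simp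
  show "\<And>k. 0 \<le> (2*R) * (1/2)^k" using R by simp
  have eq: "(\<lambda>k. (R/2 * (1/2)^k) powr (-s) * ((2*R) * (1/2)^k) ^ DIM('a)) =
     (\<lambda>k. ((R/2) powr (-s) * (2*R)^DIM('a)) * ((1/2::real) powr (real DIM('a) - s))^k)"
    using R by (intro ext pow_geom) auto
  have "norm ((1/2::real) powr (real DIM('a) - s)) < 1"
    using s by (simp add: powr01_less_one)
  thus "summable (\<lambda>k. (R/2 * (1/2)^k) powr (-s) * ((2*R) * (1/2)^k) ^ DIM('a))"
    unfolding eq by (intro summable_mult summable_geometric)
qed


lemma weighted_finite:
  fixes w :: "'a::euclidean_space \<Rightarrow> real" and M R C \<theta> p \<sigma> :: real
  assumes pos: "\<And>x. w x > 0" and M: "\<And>x. w x \<le> M"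
    and dec: "\<And>x. R \<le> norm x \<Longrightarrow> w x \<le> C * norm x powr (-\<theta>)" and R: "R > 0"
    and p: "p > 0" and \<sigma>: "0 \<le> \<sigma>" "\<sigma> < DIM('a)" and big: "(p+1)*\<theta> + \<sigma> > DIM('a)"
  shows "(\<integral>\<^sup>+x. ennreal (w x powr (p+1) / norm x powr \<sigma>) \<partial>lborel) < \<infinity>"
proof -
  define g1 where "g1 = (\<lambda>x::'a. ennreal (norm x powr (-\<sigma>)) * indicator {x. norm x < R} x)"
  define g2 where "g2 = (\<lambda>x::'a. ennreal (norm x powr (-((p+1)*\<theta>+\<sigma>))) * indicator {x. R \<le> norm x} x)"
  have "(\<integral>\<^sup>+x. ennreal (w x powr (p+1) / norm x powr \<sigma>) \<partial>lborel)
      \<le> (\<integral>\<^sup>+x. ennreal (M powr (p+1)) * g1 x + ennreal (C powr (p+1)) * g2 x \<partial>lborel)"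
  proof (intro nn_integral_mono)
    fix x :: 'a
    have e: "w x powr (p+1) / norm x powr \<sigma> = w x powr (p+1) * norm x powr (-\<sigma>)"
      by (simp add: powr_minus_divide)
    show "ennreal (w x powr (p+1) / norm x powr \<sigma>) \<le> ennreal (M powr (p+1)) * g1 x + ennreal (C powr (p+1)) * g2 x"
    proof (cases "norm x < R")
      case True
      have "w x powr (p+1) * norm x powr (-\<sigma>) \<le> M powr (p+1) * norm x powr (-\<sigma>)"
        by (intro mult_right_mono powr_mono2) (use pos[of x] M[of x] p in auto)
      hence "ennreal (w x powr (p+1) / norm x powr \<sigma>) \<le> ennreal (M powr (p+1) * norm x powr (-\<sigma>))"
        unfolding e by (rule ennreal_leI)
      also have "\<dots> = ennreal (M powr (p+1)) * g1 x"
        using True unfolding g1_def by (simp add: ennreal_mult)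
      finally show ?thesis by (simp add: add_increasing2)
    next
      case False
      hence Rx: "R \<le> norm x" by simp
      have xp: "norm x > 0" using R Rx by linarith
      have Cp: "C \<ge> 0"
      proof (rule ccontr)
        assume "\<not> C \<ge> 0"
        hence "C * norm x powr (-\<theta>) < 0" using xp by (simp add: mult_neg_pos)
        thus False using dec[OF Rx] pos[of x] by linarith
      qed
      have "w x powr (p+1) \<le> (C * norm x powr (-\<theta>)) powr (p+1)"
        by (intro powr_mono2) (use pos[of x] dec[OF Rx] p in auto)
      also have "\<dots> = C powr (p+1) * norm x powr (-\<theta>*(p+1))"
        using Cp by (simp add: powr_mult powr_powr)
      finally have "w x powr (p+1) * norm x powr (-\<sigma>) \<le> C powr (p+1) * norm x powr (-\<theta>*(p+1)) * norm x powr (-\<sigma>)"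
        by (intro mult_right_mono) auto
      also have "\<dots> = C powr (p+1) * norm x powr (-((p+1)*\<theta>+\<sigma>))"
        by (simp add: mult.assoc powr_add[symmetric] algebra_simps)
      finally have "ennreal (w x powr (p+1) / norm x powr \<sigma>) \<le> ennreal (C powr (p+1) * norm x powr (-((p+1)*\<theta>+\<sigma>)))"
        unfolding e by (rule ennreal_leI)
      also have "\<dots> = ennreal (C powr (p+1)) * g2 x"
        using Rx unfolding g2_def by (simp add: ennreal_mult)
      finally show ?thesis by (simp add: add_increasing)
    qed
  qed
  also have "\<dots> = ennreal (M powr (p+1)) * (\<integral>\<^sup>+x. g1 x \<partial>lborel) + ennreal (C powr (p+1)) * (\<integral>\<^sup>+x. g2 x \<partial>lborel)"
    unfolding g1_def g2_def
    by (subst nn_integral_add) (auto simp: nn_integral_cmult)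
  also have "\<dots> < \<infinity>"
  proof -
    have "(\<integral>\<^sup>+x. g1 x \<partial>lborel) < \<infinity>" unfolding g1_def by (rule origin_finite) (use R \<sigma> in auto)
    moreover have "(\<integral>\<^sup>+x. g2 x \<partial>lborel) < \<infinity>" unfolding g2_def by (rule tail_finite) (use R big in auto)
    ultimately show ?thesis by (simp add: ennreal_mult_less_top)
  qed
  finally show ?thesis .
qed


lemma lower_exp:
  fixes w z :: "'a::euclidean_space \<Rightarrow> real" and Rz cz \<theta>z Rw Cw \<theta>w q \<sigma> \<alpha> :: real
  assumes posw: "\<And>x. w x > 0" and posz: "\<And>x. z x > 0"
    and zlow: "\<And>y. Rz \<le> norm y \<Longrightarrow> cz * norm y powr (-\<theta>z) \<le> z y" and cz: "cz > 0" and \<theta>z: "\<theta>z > 0"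
    and wup: "\<And>x. Rw \<le> norm x \<Longrightarrow> w x \<le> Cw * norm x powr (-\<theta>w)"
    and q: "q > 0" and \<sigma>: "0 \<le> \<sigma>" and \<alpha>: "\<alpha> < DIM('a)"
    and eq: "\<And>x. ennreal (w x) = (\<integral>\<^sup>+ y. ennreal (z y powr q / (norm (x - y) powr (real DIM('a) - \<alpha>) * norm y powr \<sigma>)) \<partial>lborel)"
  shows "\<theta>w \<le> q * \<theta>z + \<sigma> - \<alpha>"
proof -
  define D where "D = real DIM('a)"
  define V where "V = unit_ball_vol D"
  define e where "e = \<alpha> - \<sigma> - q*\<theta>z"
  define K where "K = V * cz powr q * 3 powr (-(\<theta>z*q) - \<sigma>)"
  have Vp: "V > 0" unfolding V_def D_def by simp
  have Kp: "K > 0" unfolding K_def using Vp cz by simp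
  define r0 where "r0 = max 1 (max Rz Rw)"
  have key: "K * r powr e \<le> Cw * 2 powr (-\<theta>w) * r powr (-\<theta>w)" if r: "r0 \<le> r" for r
  proof -
    have rp: "r > 0" "r \<ge> 1" "r \<ge> Rz" "2*r \<ge> Rw" using r unfolding r0_def by auto
    obtain x :: 'a where nx: "norm x = 2*r" using vector_choose_size[of "2*r"] rp by auto
    define Kr where "Kr = (cz * (3*r) powr (-\<theta>z)) powr q / (r powr (D - \<alpha>) * (3*r) powr \<sigma>)"
    have Krp: "Kr \<ge> 0" unfolding Kr_def using cz rp by simp
    have AE: "AE y in lborel. ennreal Kr * indicator (ball x r) y \<le> ennreal (z y powr q / (norm (x - y) powr (D - \<alpha>) * norm y powr \<sigma>))"
      using AE_lborel_singleton[of x]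
    proof eventually_elim
      fix y :: 'a assume yx: "y \<noteq> x"
      show "ennreal Kr * indicator (ball x r) y \<le> ennreal (z y powr q / (norm (x - y) powr (D - \<alpha>) * norm y powr \<sigma>))"
      proof (cases "y \<in> ball x r")
        case False thus ?thesis by simp
      next
        case True
        hence dxy: "norm (x - y) < r" by (simp add: dist_norm)
        have dxy0: "norm (x - y) > 0" using yx by simp
        have ny1: "r \<le> norm y" using norm_triangle_ineq2[of x y] nx dxy by linarith
        have ny2: "norm y \<le> 3*r" using norm_triangle_sub[of y x] nx dxy norm_minus_commute[of x y] by linarith
        have zy: "cz * (3*r) powr (-\<theta>z) \<le> z y"
        proof -
          have "cz * (3*r) powr (-\<theta>z) \<le> cz * norm y powr (-\<theta>z)"
            by (intro mult_left_mono powr_mono2') (use \<theta>z rp ny1 ny2 cz in auto)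
          also have "\<dots> \<le> z y" by (rule zlow) (use ny1 rp in linarith)
          finally show ?thesis .
        qed
        have num: "(cz * (3*r) powr (-\<theta>z)) powr q \<le> z y powr q"
          by (rule powr_mono2) (use q zy cz in auto)
        have den: "norm (x - y) powr (D - \<alpha>) * norm y powr \<sigma> \<le> r powr (D - \<alpha>) * (3*r) powr \<sigma>"
          by (intro mult_mono powr_mono2) (use dxy \<alpha> \<sigma> ny2 in \<open>auto simp: D_def\<close>)
        have denp: "0 < norm (x - y) powr (D - \<alpha>) * norm y powr \<sigma>" using dxy0 ny1 rp by (intro mult_pos_pos) auto
        have "Kr \<le> z y powr q / (norm (x - y) powr (D - \<alpha>) * norm y powr \<sigma>)"
          unfolding Kr_def by (rule frac_le) (use num den denp in auto)
        thus ?thesis using True by (simp add: ennreal_leI)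
      qed
    qed
    have "ennreal Kr * emeasure lborel (ball x r) \<le> ennreal (w x)"
    proof -
      have "ennreal Kr * emeasure lborel (ball x r) = (\<integral>\<^sup>+y. ennreal Kr * indicator (ball x r) y \<partial>lborel)"
        by (simp add: nn_integral_cmult_indicator)
      also have "\<dots> \<le> (\<integral>\<^sup>+y. ennreal (z y powr q / (norm (x - y) powr (D - \<alpha>) * norm y powr \<sigma>)) \<partial>lborel)"
        by (rule nn_integral_mono_AE[OF AE])
      also have "\<dots> = ennreal (w x)" using eq[of x] by (simp add: D_def)
      finally show ?thesis .
    qed
    hence A: "Kr * (V * r ^ DIM('a)) \<le> w x"
      using rp Krp Vp posw[of x] by (simp add: emeasure_ball V_def D_def ennreal_mult[symmetric])
    have B: "Kr * (V * r ^ DIM('a)) = K * r powr e"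
    proof -
      have 1: "(cz * (3*r) powr (-\<theta>z)) powr q = cz powr q * 3 powr (-(\<theta>z*q)) * r powr (-(\<theta>z*q))"
        using cz rp by (simp add: powr_mult powr_powr)
      have 2: "(3*r) powr \<sigma> = 3 powr \<sigma> * r powr \<sigma>" using rp by (simp add: powr_mult)
      have 3: "r ^ DIM('a) = r powr D" using rp by (simp add: D_def powr_realpow)
      have 4: "3 powr (-(\<theta>z*q) - \<sigma>) = 3 powr (-(\<theta>z*q)) / 3 powr \<sigma>" by (simp add: powr_diff)
      have 5: "r powr e = r powr (-(\<theta>z*q)) * r powr D / (r powr (D - \<alpha>) * r powr \<sigma>)"
        unfolding e_def by (simp add: powr_add[symmetric] powr_diff[symmetric] algebra_simps)
      show ?thesis unfolding Kr_def K_def 1 2 3 4 5 by (simp add: field_simps)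
    qed
    have C: "w x \<le> Cw * 2 powr (-\<theta>w) * r powr (-\<theta>w)"
      using wup[of x] nx rp by (simp add: powr_mult)
    show ?thesis using A B C by linarith
  qed
  show ?thesis
  proof (rule ccontr)
    assume "\<not> ?thesis"
    hence g: "\<theta>w + e > 0" unfolding e_def by linarith
    define B where "B = max 1 (Cw * 2 powr (-\<theta>w) / K) + 1"
    define r where "r = max r0 (B powr (1/(\<theta>w+e)))"
    have rr: "r0 \<le> r" unfolding r_def by simp
    have rp: "r > 0" using rr unfolding r0_def by linarith
    have Bp: "B > 0" unfolding B_def by simp
    have "K * r powr e * r powr \<theta>w \<le> Cw * 2 powr (-\<theta>w) * r powr (-\<theta>w) * r powr \<theta>w"
      using key[OF rr] by (intro mult_right_mono) auto
    hence "K * r powr (\<theta>w + e) \<le> Cw * 2 powr (-\<theta>w)"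
      using rp by (simp add: mult.assoc powr_add[symmetric] add.commute)
    hence 1: "r powr (\<theta>w + e) \<le> Cw * 2 powr (-\<theta>w) / K"
      using Kp by (simp add: field_simps)
    have "B = (B powr (1/(\<theta>w+e))) powr (\<theta>w+e)" using Bp g by (simp add: powr_powr)
    also have "\<dots> \<le> r powr (\<theta>w + e)"
      by (rule powr_mono2) (use g r_def in auto)
    finally have "B \<le> r powr (\<theta>w + e)" .
    with 1 show False unfolding B_def by linarith
  qed
qed


theorem proposition2p1:
  fixes u v :: "real ^ 'n \<Rightarrow> real" and p q \<alpha> \<sigma>1 \<sigma>2 :: real
  defines "n \<equiv> real CARD('n)"
  assumes dim: "CARD('n) \<ge> 3"
    and pq: "p > 0" "q > 0" "p * q > 1"
    and alpha: "0 < \<alpha>" "\<alpha> < n"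
    and sigma: "0 \<le> \<sigma>1" "\<sigma>1 < \<alpha>" "0 \<le> \<sigma>2" "\<sigma>2 < \<alpha>"
    and meas: "u \<in> borel_measurable lborel" "v \<in> borel_measurable lborel"
    and pos: "\<And>x. u x > 0" "\<And>x. v x > 0"
    and bdd: "\<exists>M. \<forall>x. u x \<le> M" "\<exists>M. \<forall>x. v x \<le> M"
    and dec: "\<exists>\<theta>1>0. decays_like u \<theta>1" "\<exists>\<theta>2>0. decays_like v \<theta>2"
    and equ: "\<And>x. ennreal (u x) = (\<integral>\<^sup>+ y. ennreal (v y powr q /
                   (norm (x - y) powr (n - \<alpha>) * norm y powr \<sigma>1)) \<partial>lborel)"
    and eqv: "\<And>x. ennreal (v x) = (\<integral>\<^sup>+ y. ennreal (u y powr p /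
                   (norm (x - y) powr (n - \<alpha>) * norm y powr \<sigma>2)) \<partial>lborel)"
  shows "(\<exists>C>0. \<exists>R. \<forall>x. norm x \<ge> R \<longrightarrow>
            u x \<le> C * norm x powr (- q0 \<alpha> p q \<sigma>1 \<sigma>2) \<and>
            v x \<le> C * norm x powr (- p0 \<alpha> p q \<sigma>1 \<sigma>2))
       \<and> ((n - \<sigma>1) / (1 + q) + (n - \<sigma>2) / (1 + p) > n - \<alpha> \<longrightarrow>
            (\<integral>\<^sup>+ x. ennreal (u x powr (p + 1) / norm x powr \<sigma>2) \<partial>lborel) < \<infinity> \<and>
            (\<integral>\<^sup>+ x. ennreal (v x powr (q + 1) / norm x powr \<sigma>1) \<partial>lborel) < \<infinity>)"
  proof -
  from dec(1) obtain \<theta>1 where \<theta>1: "\<theta>1 > 0" "decays_like u \<theta>1" by blast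
  then obtain c1 C1 R1 where cc1: "c1 > 0" "C1 > 0"
    and u1: "\<And>x. norm x \<ge> R1 \<Longrightarrow> c1 * norm x powr (-\<theta>1) \<le> u x \<and> u x \<le> C1 * norm x powr (-\<theta>1)"
    unfolding decays_like_def by blast
  from dec(2) obtain \<theta>2 where \<theta>2: "\<theta>2 > 0" "decays_like v \<theta>2" by blast
  then obtain c2 C2 R2 where cc2: "c2 > 0" "C2 > 0"
    and v1: "\<And>x. norm x \<ge> R2 \<Longrightarrow> c2 * norm x powr (-\<theta>2) \<le> v x \<and> v x \<le> C2 * norm x powr (-\<theta>2)"
    unfolding decays_like_def by blast
  have equ': "\<And>x. ennreal (u x) = (\<integral>\<^sup>+ y. ennreal (v y powr q / (norm (x - y) powr (real DIM(real^'n) - \<alpha>) * norm y powr \<sigma>1)) \<partial>lborel)"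
    using equ unfolding n_def by simp
  have eqv': "\<And>x. ennreal (v x) = (\<integral>\<^sup>+ y. ennreal (u y powr p / (norm (x - y) powr (real DIM(real^'n) - \<alpha>) * norm y powr \<sigma>2)) \<partial>lborel)"
    using eqv unfolding n_def by simp
  have aD: "\<alpha> < real DIM(real^'n)" using alpha(2) unfolding n_def by simp
  have h1: "\<theta>1 \<le> q*\<theta>2 + \<sigma>1 - \<alpha>"
    by (rule lower_exp[of u v R2 c2 \<theta>2 R1 C1 \<theta>1 q \<sigma>1 \<alpha>]) (use pos u1 v1 cc2 \<theta>2 pq sigma aD equ' in auto)
  have h2: "\<theta>2 \<le> p*\<theta>1 + \<sigma>2 - \<alpha>"
    by (rule lower_exp[of v u R1 c1 \<theta>1 R2 C2 \<theta>2 p \<sigma>2 \<alpha>]) (use pos u1 v1 cc1 \<theta>1 pq sigma aD eqv' in auto)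
  have pq1: "p*q - 1 > 0" using pq by linarith
  have t1: "q0 \<alpha> p q \<sigma>1 \<sigma>2 \<le> \<theta>1"
  proof -
    have a: "q*\<theta>2 \<le> q*(p*\<theta>1 + \<sigma>2 - \<alpha>)" using h2 pq by (intro mult_left_mono) auto
    have b: "(p*q - 1)*\<theta>1 - (\<alpha>*(1+q) - (\<sigma>1+\<sigma>2*q)) = q*(p*\<theta>1+\<sigma>2-\<alpha>) - q*\<theta>2 + (q*\<theta>2 + \<sigma>1 - \<alpha> - \<theta>1)"
      by (simp add: algebra_simps)
    have "\<alpha>*(1+q) - (\<sigma>1+\<sigma>2*q) \<le> \<theta>1 * (p*q - 1)" using a b h1 by (simp add: mult.commute)
    thus ?thesis unfolding q0_def using pq1 by (simp add: pos_divide_le_eq)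
  qed
  have t2: "p0 \<alpha> p q \<sigma>1 \<sigma>2 \<le> \<theta>2"
  proof -
    have a: "p*\<theta>1 \<le> p*(q*\<theta>2 + \<sigma>1 - \<alpha>)" using h1 pq by (intro mult_left_mono) auto
    have b: "(p*q - 1)*\<theta>2 - (\<alpha>*(1+p) - (\<sigma>2+\<sigma>1*p)) = p*(q*\<theta>2+\<sigma>1-\<alpha>) - p*\<theta>1 + (p*\<theta>1 + \<sigma>2 - \<alpha> - \<theta>2)"
      by (simp add: algebra_simps)
    have "\<alpha>*(1+p) - (\<sigma>2+\<sigma>1*p) \<le> \<theta>2 * (p*q - 1)" using a b h2 by (simp add: mult.commute)
    thus ?thesis unfolding p0_def using pq1 by (simp add: pos_divide_le_eq)
  qed
  have part1: "\<exists>C>0. \<exists>R. \<forall>x. norm x \<ge> R \<longrightarrow>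
            u x \<le> C * norm x powr (- q0 \<alpha> p q \<sigma>1 \<sigma>2) \<and>
            v x \<le> C * norm x powr (- p0 \<alpha> p q \<sigma>1 \<sigma>2)"
  proof (rule exI[of _ "max C1 C2"], rule conjI)
    show "max C1 C2 > 0" using cc1 by simp
    show "\<exists>R. \<forall>x. norm x \<ge> R \<longrightarrow>
            u x \<le> max C1 C2 * norm x powr (- q0 \<alpha> p q \<sigma>1 \<sigma>2) \<and>
            v x \<le> max C1 C2 * norm x powr (- p0 \<alpha> p q \<sigma>1 \<sigma>2)"
    proof (rule exI[of _ "max (max R1 R2) 1"], intro allI impI conjI)
    fix x :: "real^'n" assume x: "max (max R1 R2) 1 \<le> norm x"
    have "u x \<le> C1 * norm x powr (-\<theta>1)" using u1[of x] x by auto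
    also have "\<dots> \<le> C1 * norm x powr (- q0 \<alpha> p q \<sigma>1 \<sigma>2)"
      by (intro mult_left_mono powr_mono) (use t1 x cc1 in auto)
    also have "\<dots> \<le> max C1 C2 * norm x powr (- q0 \<alpha> p q \<sigma>1 \<sigma>2)"
      by (intro mult_right_mono) auto
    finally show "u x \<le> max C1 C2 * norm x powr (- q0 \<alpha> p q \<sigma>1 \<sigma>2)" .
    have "v x \<le> C2 * norm x powr (-\<theta>2)" using v1[of x] x by auto
    also have "\<dots> \<le> C2 * norm x powr (- p0 \<alpha> p q \<sigma>1 \<sigma>2)"
      by (intro mult_left_mono powr_mono) (use t2 x cc2 in auto)
    also have "\<dots> \<le> max C1 C2 * norm x powr (- p0 \<alpha> p q \<sigma>1 \<sigma>2)"
      by (intro mult_right_mono) auto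
    finally show "v x \<le> max C1 C2 * norm x powr (- p0 \<alpha> p q \<sigma>1 \<sigma>2)" .
    qed
  qed
  have part2: "(\<integral>\<^sup>+ x. ennreal (u x powr (p + 1) / norm x powr \<sigma>2) \<partial>lborel) < \<infinity> \<and>
            (\<integral>\<^sup>+ x. ennreal (v x powr (q + 1) / norm x powr \<sigma>1) \<partial>lborel) < \<infinity>"
    if H: "(n - \<sigma>1) / (1 + q) + (n - \<sigma>2) / (1 + p) > n - \<alpha>"
  proof -
    have H': "(n-\<sigma>1)*(1+p) + (n-\<sigma>2)*(1+q) > (n-\<alpha>)*(1+p)*(1+q)"
      using H pq by (simp add: field_simps)
    have id1: "(p+1)*(\<alpha>*(1+q) - (\<sigma>1+\<sigma>2*q)) + \<sigma>2*(p*q-1) - n*(p*q-1)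
        = (n-\<sigma>1)*(1+p) + (n-\<sigma>2)*(1+q) - (n-\<alpha>)*(1+p)*(1+q)"
      by (simp add: algebra_simps)
    have id2: "(q+1)*(\<alpha>*(1+p) - (\<sigma>2+\<sigma>1*p)) + \<sigma>1*(p*q-1) - n*(p*q-1)
        = (n-\<sigma>1)*(1+p) + (n-\<sigma>2)*(1+q) - (n-\<alpha>)*(1+p)*(1+q)"
      by (simp add: algebra_simps)
    have e1: "(p+1)*q0 \<alpha> p q \<sigma>1 \<sigma>2 + \<sigma>2 - n
       = ((p+1)*(\<alpha>*(1+q) - (\<sigma>1+\<sigma>2*q)) + \<sigma>2*(p*q-1) - n*(p*q-1)) / (p*q-1)"
      unfolding q0_def using pq1 by (simp add: field_simps)
    have e2: "(q+1)*p0 \<alpha> p q \<sigma>1 \<sigma>2 + \<sigma>1 - n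
       = ((q+1)*(\<alpha>*(1+p) - (\<sigma>2+\<sigma>1*p)) + \<sigma>1*(p*q-1) - n*(p*q-1)) / (p*q-1)"
      unfolding p0_def using pq1 by (simp add: field_simps)
    have g1: "(p+1)*q0 \<alpha> p q \<sigma>1 \<sigma>2 + \<sigma>2 - n > 0"
      unfolding e1 id1 using H' pq1 by (intro divide_pos_pos) auto
    have g2: "(q+1)*p0 \<alpha> p q \<sigma>1 \<sigma>2 + \<sigma>1 - n > 0"
      unfolding e2 id2 using H' pq1 by (intro divide_pos_pos) auto
    have "(p+1)*q0 \<alpha> p q \<sigma>1 \<sigma>2 \<le> (p+1)*\<theta>1" using t1 pq by (intro mult_left_mono) auto
    hence big1: "(p+1)*\<theta>1 + \<sigma>2 > real DIM(real^'n)" using g1 unfolding n_def by simp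
    have "(q+1)*p0 \<alpha> p q \<sigma>1 \<sigma>2 \<le> (q+1)*\<theta>2" using t2 pq by (intro mult_left_mono) auto
    hence big2: "(q+1)*\<theta>2 + \<sigma>1 > real DIM(real^'n)" using g2 unfolding n_def by simp
    obtain M1 where M1: "\<And>x. u x \<le> M1" using bdd(1) by blast
    obtain M2 where M2: "\<And>x. v x \<le> M2" using bdd(2) by blast
    have s1: "\<sigma>1 < real DIM(real^'n)" using sigma aD by linarith
    have s2: "\<sigma>2 < real DIM(real^'n)" using sigma aD by linarith
    have "(\<integral>\<^sup>+ x. ennreal (u x powr (p + 1) / norm x powr \<sigma>2) \<partial>lborel) < \<infinity>"
      by (rule weighted_finite[of u M1 "max R1 1" C1 \<theta>1 p \<sigma>2])
         (use pos M1 u1 pq sigma s2 big1 in auto)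
    moreover have "(\<integral>\<^sup>+ x. ennreal (v x powr (q + 1) / norm x powr \<sigma>1) \<partial>lborel) < \<infinity>"
      by (rule weighted_finite[of v M2 "max R2 1" C2 \<theta>2 q \<sigma>1])
         (use pos M2 v1 pq sigma s1 big2 in auto)
    ultimately show ?thesis ..
  qed
  show ?thesis using part1 part2 by blast
qed

end
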